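(* Let $\mu$ be a positive real with $\mu\le\frac{1}{225}$. Let $G$ be an $n$-vertex graph of minimum degree at least $15\sqrt{\mu}\,n$, and let $\mathcal{F}$ be a $\mu n$-bounded incompatibility system over $G$. Suppose $P=(v_0,v_1,\dots,v_\ell)$ is a smooth path in $G$ such that there is no vertex $w\notin V(P)$ for which $(w,v_0,\dots,v_\ell)$ is a smooth path. Then there exists a subset $X$ of the set of good neighbors of $v_0$ in $P$ with $|X|\ge d(v_0)-14\sqrt{\mu}\,n$ such that for every $v_i\in X$ the path $(v_{i-1},\dots,v_1,v_0,v_i,v_{i+1},\dots,v_\ell)$ is smooth.
   Context: All graphs are finite and simple; $d(v)$ is the degree of $v$. An incompatibility system $\mathcal{F}$ over $G=(V,E)$ is a family $\{F_v\}_{v\in V}$ where each $F_v$ is a set of unordered pairs $\{e,e'\}$ of distinct edges with $e\cap e'=\{v\}$; edges $e,e'$ are incompatible if $\{e,e'\}\in F_v$ for some $v$, compatible otherwise. A subgraph (path, cycle) is compatible with $\mathcal{F}$ if every pair of its edges is compatible. For a positive real $\Delta$, $\mathcal{F}$ is $\Delta$-bounded if for every vertex $v$ and edge $e\ni v$, at most $\Delta$ other edges $e'\ni v$ satisfy $\{e,e'\}\in F_v$. For a path $P=(v_0,\dots,v_\ell)$, $|P|$ is its number of vertices. For a vertex $w$, a vertex $v_i\in V(P)$ adjacent to $w$ is a bad neighbor of $w$ in $P$ if $\{w,v_i\}$ is incompatible with $\{v_i,v_{i-1}\}$ or with $\{v_i,v_{i+1}\}$ (for those of these that are edges of $P$),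 and a good neighbor otherwise. For $\gamma>0$, $w$ is $\gamma$-bad for $P$ if it has at least $\gamma|P|$ bad neighbors in $P$, and $\gamma$-good otherwise. Two vertices $v_1,v_2$ are $\gamma$-correlated if there are at least $\gamma n$ vertices $w$ such that $\{v_1,w\}$ and $\{v_2,w\}$ are incompatible edges; otherwise $\gamma$-uncorrelated. For an $n$-vertex graph with a $\mu n$-bounded system $\mathcal{F}$, a path $P=(v_0,\dots,v_\ell)$ is smooth (smoothly compatible with $\mathcal{F}$) if (i) $P$ is compatible with $\mathcal{F}$, (ii) both $v_0$ and $v_\ell$ are $8\sqrt{\mu}$-good for $P$, and (iii) $v_0$ and $v_\ell$ are $\sqrt{\mu}$-uncorrelated. *)

theory Defs
  imports Complex_Main
begin

definition simple_graph :: "'a set \<Rightarrow> 'a set set \<Rightarrow> bool" where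
  "simple_graph V E \<longleftrightarrow> finite V \<and> (\<forall>e\<in>E. e \<subseteq> V \<and> card e = 2)"

definition degree :: "'a set set \<Rightarrow> 'a \<Rightarrow> nat" where
  "degree E v = card {e\<in>E. v \<in> e}"

definition incompat_system :: "'a set \<Rightarrow> 'a set set \<Rightarrow> ('a \<Rightarrow> 'a set set set) \<Rightarrow> bool" where
  "incompat_system V E F \<longleftrightarrow>
     (\<forall>v. \<forall>p\<in>F v. \<exists>e e'. p = {e, e'} \<and> e \<noteq> e' \<and> e \<in> E \<and> e' \<in> E \<and> e \<inter> e' = {v})
     \<and> (\<forall>v. v \<notin> V \<longrightarrow> F v = {})"

definition incompatible :: "('a \<Rightarrow> 'a set set set) \<Rightarrow> 'a set \<Rightarrow> 'a set \<Rightarrow> bool" where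
  "incompatible F e e' \<longleftrightarrow> (\<exists>v. {e, e'} \<in> F v)"

definition bounded_system :: "'a set set \<Rightarrow> ('a \<Rightarrow> 'a set set set) \<Rightarrow> real \<Rightarrow> bool" where
  "bounded_system E F \<Delta> \<longleftrightarrow>
     (\<forall>v. \<forall>e\<in>E. v \<in> e \<longrightarrow> real (card {e'. e' \<noteq> e \<and> v \<in> e' \<and> {e, e'} \<in> F v}) \<le> \<Delta>)"

definition is_path :: "'a set \<Rightarrow> 'a set set \<Rightarrow> 'a list \<Rightarrow> bool" where
  "is_path V E P \<longleftrightarrow> P \<noteq> [] \<and> distinct P \<and> set P \<subseteq> V \<and>
     (\<forall>i. Suc i < length P \<longrightarrow> {P ! i, P ! Suc i} \<in> E)"

definition path_edges :: "'a list \<Rightarrow> 'a set set" where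
  "path_edges P = {{P ! i, P ! Suc i} | i. Suc i < length P}"

definition compatible_path :: "('a \<Rightarrow> 'a set set set) \<Rightarrow> 'a list \<Rightarrow> bool" where
  "compatible_path F P \<longleftrightarrow>
     (\<forall>e\<in>path_edges P. \<forall>e'\<in>path_edges P. \<not> incompatible F e e')"

definition bad_neighbor :: "'a set set \<Rightarrow> ('a \<Rightarrow> 'a set set set) \<Rightarrow> 'a list \<Rightarrow> 'a \<Rightarrow> nat \<Rightarrow> bool" where
  "bad_neighbor E F P w i \<longleftrightarrow> i < length P \<and> {w, P ! i} \<in> E \<and>
     ((0 < i \<and> incompatible F {w, P ! i} {P ! i, P ! (i - 1)}) \<or>
      (Suc i < length P \<and> incompatible F {w, P ! i} {P ! i, P ! Suc i}))"

definition good_neighbor :: "'a set set \<Rightarrow> ('a \<Rightarrow> 'a set set set) \<Rightarrow> 'a list \<Rightarrow> 'a \<Rightarrow> nat \<Rightarrow> bool" where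
  "good_neighbor E F P w i \<longleftrightarrow> i < length P \<and> {w, P ! i} \<in> E \<and> \<not> bad_neighbor E F P w i"

definition bad_neighbors :: "'a set set \<Rightarrow> ('a \<Rightarrow> 'a set set set) \<Rightarrow> 'a list \<Rightarrow> 'a \<Rightarrow> 'a set" where
  "bad_neighbors E F P w = {P ! i | i. bad_neighbor E F P w i}"

definition good_neighbors :: "'a set set \<Rightarrow> ('a \<Rightarrow> 'a set set set) \<Rightarrow> 'a list \<Rightarrow> 'a \<Rightarrow> 'a set" where
  "good_neighbors E F P w = {P ! i | i. good_neighbor E F P w i}"

definition gamma_bad :: "'a set set \<Rightarrow> ('a \<Rightarrow> 'a set set set) \<Rightarrow> real \<Rightarrow> 'a list \<Rightarrow> 'a \<Rightarrow> bool" where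
  "gamma_bad E F \<gamma> P w \<longleftrightarrow> real (card (bad_neighbors E F P w)) \<ge> \<gamma> * real (length P)"

definition gamma_good :: "'a set set \<Rightarrow> ('a \<Rightarrow> 'a set set set) \<Rightarrow> real \<Rightarrow> 'a list \<Rightarrow> 'a \<Rightarrow> bool" where
  "gamma_good E F \<gamma> P w \<longleftrightarrow> \<not> gamma_bad E F \<gamma> P w"

definition correlated :: "'a set \<Rightarrow> 'a set set \<Rightarrow> ('a \<Rightarrow> 'a set set set) \<Rightarrow> real \<Rightarrow> 'a \<Rightarrow> 'a \<Rightarrow> bool" where
  "correlated V E F \<gamma> v1 v2 \<longleftrightarrow>
     real (card {w\<in>V. {v1, w} \<in> E \<and> {v2, w} \<in> E \<and> incompatible F {v1, w} {v2, w}})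
       \<ge> \<gamma> * real (card V)"

definition smooth_path :: "'a set \<Rightarrow> 'a set set \<Rightarrow> ('a \<Rightarrow> 'a set set set) \<Rightarrow> real \<Rightarrow> 'a list \<Rightarrow> bool" where
  "smooth_path V E F \<mu> P \<longleftrightarrow> is_path V E P \<and> compatible_path F P \<and>
     gamma_good E F (8 * sqrt \<mu>) P (hd P) \<and> gamma_good E F (8 * sqrt \<mu>) P (last P) \<and>
     \<not> correlated V E F (sqrt \<mu>) (hd P) (last P)"

end

theory Submission
  imports Defs
begin


lemma card_swap:
  assumes "finite A" "finite B"
  shows "(\<Sum>a\<in>A. card {b\<in>B. R a b}) = (\<Sum>b\<in>B. card {a\<in>A. R a b})"
proof -
  have "(\<Sum>a\<in>A. card {b\<in>B. R a b}) = (\<Sum>a\<in>A. \<Sum>b\<in>B. (of_bool (R a b)::nat))"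
    using assms by (simp add: Collect_conj_eq Int_commute)
  also have "\<dots> = (\<Sum>b\<in>B. \<Sum>a\<in>A. (of_bool (R a b)::nat))" by (rule sum.swap)
  also have "\<dots> = (\<Sum>b\<in>B. card {a\<in>A. R a b})"
    using assms by (simp add: Collect_conj_eq Int_commute)
  finally show ?thesis .
qed

lemma inc_sym: "incompatible F e e' = incompatible F e' e"
  unfolding incompatible_def by (simp add: insert_commute)

fun pe :: "'a list \<Rightarrow> 'a set set" where
  "pe [] = {}"
| "pe [x] = {}"
| "pe (x # y # zs) = insert {x, y} (pe (y # zs))"

lemma path_edges_Nil: "path_edges [] = {}" by (simp add: path_edges_def)
lemma path_edges_single: "path_edges [x] = {}" by (simp add: path_edges_def)
lemma path_edges_Cons2: "path_edges (x # y # zs) = insert {x, y} (path_edges (y # zs))"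
proof (rule set_eqI, rule iffI)
  fix e assume "e \<in> path_edges (x # y # zs)"
  then obtain i where i: "e = {(x#y#zs)!i, (x#y#zs)! Suc i}" "Suc i < length (x#y#zs)"
    by (auto simp: path_edges_def)
  show "e \<in> insert {x, y} (path_edges (y # zs))"
  proof (cases i)
    case 0 then show ?thesis using i by simp
  next
    case (Suc j) then show ?thesis using i by (auto simp: path_edges_def)
  qed
next
  fix e assume "e \<in> insert {x, y} (path_edges (y # zs))"
  then show "e \<in> path_edges (x # y # zs)"
  proof
    assume "e = {x,y}" then show ?thesis unfolding path_edges_def
      by (rule_tac CollectI, rule_tac x=0 in exI, simp)
  next
    assume "e \<in> path_edges (y # zs)"
    then obtain j where j: "e = {(y#zs)!j, (y#zs)! Suc j}" "Suc j < length (y#zs)"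
      by (auto simp: path_edges_def)
    then show ?thesis unfolding path_edges_def
      by (rule_tac CollectI, rule_tac x="Suc j" in exI, simp)
  qed
qed

lemma path_edges_pe: "path_edges xs = pe xs"
  by (induction xs rule: pe.induct) (auto simp: path_edges_Nil path_edges_single path_edges_Cons2)

lemma pe_append: "xs \<noteq> [] \<Longrightarrow> ys \<noteq> [] \<Longrightarrow> pe (xs @ ys) = pe xs \<union> pe ys \<union> {{last xs, hd ys}}"
proof (induction xs)
  case Nil then show ?case by simp
next
  case (Cons a xs)
  show ?case
  proof (cases xs)
    case Nil then show ?thesis using Cons by (cases ys) auto
  next
    case (Cons b xs') then show ?thesis using Cons.IH Cons.prems by auto
  qed
qed

lemma pe_Cons: "xs \<noteq> [] \<Longrightarrow> pe (w # xs) = insert {w, hd xs} (pe xs)"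
  by (cases xs) auto

lemma pe_rev: "pe (rev xs) = pe xs"
proof (induction xs)
  case Nil then show ?case by simp
next
  case (Cons a xs)
  show ?case
  proof (cases "xs = []")
    case True then show ?thesis by simp
  next
    case False
    then have "pe (rev (a#xs)) = pe (rev xs) \<union> pe [a] \<union> {{last (rev xs), hd [a]}}"
      using pe_append[of "rev xs" "[a]"] by simp
    also have "\<dots> = insert {a, hd xs} (pe xs)" using Cons False
      by (auto simp: last_rev insert_commute)
    also have "\<dots> = pe (a#xs)" using pe_Cons[OF False] by simp
    finally show ?thesis .
  qed
qed

lemma pe_sub_set: "e \<in> pe xs \<Longrightarrow> e \<subseteq> set xs"
  by (induction xs rule: pe.induct) auto

lemma pe_hd: "distinct xs \<Longrightarrow> e \<in> pe xs \<Longrightarrow> hd xs \<in> e \<Longrightarrow> e = {xs!0, xs!1}"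
proof (induction xs rule: pe.induct)
  case (3 x y zs)
  then show ?case using pe_sub_set[of e "y#zs"] by auto
qed auto

lemma is_path_alt: "is_path V E L \<longleftrightarrow> L \<noteq> [] \<and> distinct L \<and> set L \<subseteq> V \<and> path_edges L \<subseteq> E"
  unfolding is_path_def path_edges_def by auto

lemma bad_char:
  assumes "distinct L"
  shows "bad_neighbors E F L u = {y\<in>set L. {u,y}\<in>E \<and> (\<exists>e\<in>path_edges L. y\<in>e \<and> incompatible F {u,y} e)}"
proof (rule set_eqI, rule iffI)
  fix y assume "y \<in> bad_neighbors E F L u"
  then obtain i where i: "y = L!i" "bad_neighbor E F L u i" by (auto simp: bad_neighbors_def)
  then have il: "i < length L" "{u, L!i} \<in> E" by (auto simp: bad_neighbor_def)
  from i(2) consider "0 < i" "incompatible F {u, L!i} {L!i, L!(i-1)}"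
    | "Suc i < length L" "incompatible F {u, L!i} {L!i, L!Suc i}"
    by (auto simp: bad_neighbor_def)
  then show "y \<in> {y\<in>set L. {u,y}\<in>E \<and> (\<exists>e\<in>path_edges L. y\<in>e \<and> incompatible F {u,y} e)}"
  proof cases
    case 1
    have "{L!(i-1), L!Suc (i-1)} \<in> path_edges L" unfolding path_edges_def using 1 il
      by (rule_tac CollectI, rule_tac x="i-1" in exI, simp)
    moreover have "{L!(i-1), L!Suc (i-1)} = {L!i, L!(i-1)}" using 1 by (simp add: insert_commute)
    ultimately show ?thesis using 1 il i by auto
  next
    case 2
    have "{L!i, L!Suc i} \<in> path_edges L" unfolding path_edges_def using 2
      by (rule_tac CollectI, rule_tac x="i" in exI, simp)
    then show ?thesis using 2 il i by auto
  qed
next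
  fix y assume "y \<in> {y\<in>set L. {u,y}\<in>E \<and> (\<exists>e\<in>path_edges L. y\<in>e \<and> incompatible F {u,y} e)}"
  then obtain e i where y: "y = L!i" "i < length L" "{u,y}\<in>E" "e \<in> path_edges L" "y \<in> e"
     "incompatible F {u,y} e" by (auto simp: in_set_conv_nth)
  then obtain j where j: "e = {L!j, L!Suc j}" "Suc j < length L" by (auto simp: path_edges_def)
  have "bad_neighbor E F L u i"
  proof (cases "L!i = L!j")
    case True
    then have "i = j" using assms y j by (simp add: nth_eq_iff_index_eq)
    then show ?thesis using y j unfolding bad_neighbor_def by auto
  next
    case False
    then have "L!i = L!Suc j" using y j by auto
    then have "i = Suc j" using assms y j by (simp add: nth_eq_iff_index_eq)
    then show ?thesis using y j unfolding bad_neighbor_def by (auto simp: insert_commute)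
  qed
  then show "y \<in> bad_neighbors E F L u" using y by (auto simp: bad_neighbors_def)
qed

lemma bad_sub_set: "bad_neighbors E F L u \<subseteq> set L"
  by (auto simp: bad_neighbors_def bad_neighbor_def)

lemma bad_mono:
  assumes "distinct P" "distinct Q" "path_edges Q \<subseteq> path_edges P \<union> {f}"
  shows "bad_neighbors E F Q u \<subseteq> bad_neighbors E F P u \<union> {y\<in>f. incompatible F {u,y} f}"
proof
  fix y assume "y \<in> bad_neighbors E F Q u"
  then obtain e where e: "{u,y}\<in>E" "e \<in> path_edges Q" "y\<in>e" "incompatible F {u,y} e"
    using bad_char[OF assms(2)] by auto
  show "y \<in> bad_neighbors E F P u \<union> {y\<in>f. incompatible F {u,y} f}"
  proof (cases "e = f")
    case True then show ?thesis using e by auto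
  next
    case False
    then have "e \<in> path_edges P" using e assms(3) by auto
    then have "y \<in> set P" using e pe_sub_set by (auto simp: path_edges_pe)
    then show ?thesis using bad_char[OF assms(1)] e \<open>e \<in> path_edges P\<close> by auto
  qed
qed




locale gsetting =
  fixes V :: "'a set" and E :: "'a set set" and F :: "'a \<Rightarrow> 'a set set set" and m :: real
  assumes sg: "simple_graph V E"
    and isys: "incompat_system V E F"
    and bd: "bounded_system E F m" and m0: "0 \<le> m"
begin

lemma finV: "finite V" using sg by (simp add: simple_graph_def)
lemma EsubV: "e \<in> E \<Longrightarrow> e \<subseteq> V" using sg by (simp add: simple_graph_def)
lemma finE: "finite E"
proof -
  have "E \<subseteq> Pow V" using EsubV by auto
  moreover have "finite (Pow V)" using finV by simp
  ultimately show ?thesis by (rule finite_subset)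
qed
lemma edge_card: "e \<in> E \<Longrightarrow> card e = 2" using sg by (simp add: simple_graph_def)
lemma edge_ne: "{a,b} \<in> E \<Longrightarrow> a \<noteq> b" using edge_card[of "{a,b}"] by auto
lemma edge_V: "{a,b} \<in> E \<Longrightarrow> a \<in> V \<and> b \<in> V" using EsubV by auto

lemma inc_D:
  assumes "incompatible F e e'"
  shows "e \<in> E \<and> e' \<in> E \<and> e \<noteq> e' \<and> (\<exists>v. e \<inter> e' = {v} \<and> {e,e'} \<in> F v)"
proof -
  obtain v where v: "{e,e'} \<in> F v" using assms by (auto simp: incompatible_def)
  have H: "\<forall>v. \<forall>p\<in>F v. \<exists>e e'. p = {e, e'} \<and> e \<noteq> e' \<and> e \<in> E \<and> e' \<in> E \<and> e \<inter> e' = {v}"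
    using isys unfolding incompat_system_def by (rule conjunct1)
  obtain a b where ab: "{e,e'} = {a,b}" "a \<noteq> b" "a \<in> E" "b \<in> E" "a \<inter> b = {v}"
    using H[rule_format, OF v] by (elim exE conjE) simp
  from ab(1) have "(e = a \<and> e' = b) \<or> (e = b \<and> e' = a)" by (metis doubleton_eq_iff)
  then show ?thesis
  proof (elim disjE)
    assume "e = a \<and> e' = b" then show ?thesis using ab v by blast
  next
    assume h: "e = b \<and> e' = a"
    then have "e \<inter> e' = {v}" using ab(5) by (simp add: Int_commute)
    then show ?thesis using h ab v by blast
  qed
qed

lemma not_inc_self: "\<not> incompatible F e e"
proof
  assume "incompatible F e e"
  then show False using inc_D[of e e] by simp
qed

lemma F_fin: "finite {e'. e' \<noteq> e \<and> v \<in> e' \<and> {e, e'} \<in> F v}"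
proof -
  have "{e'. e' \<noteq> e \<and> v \<in> e' \<and> {e, e'} \<in> F v} \<subseteq> E"
  proof
    fix e' assume "e' \<in> {e'. e' \<noteq> e \<and> v \<in> e' \<and> {e, e'} \<in> F v}"
    then have "incompatible F e e'" by (auto simp: incompatible_def)
    then show "e' \<in> E" using inc_D by blast
  qed
  then show ?thesis using finE finite_subset by blast
qed

lemma lemA: "real (card {u\<in>V. incompatible F {v,x} {v,u}}) \<le> m"
proof (cases "{u\<in>V. incompatible F {v,x} {v,u}} = {}")
  case True
  have "0 \<le> m" using m0 by simp
  then show ?thesis by (subst True) simp
next
  case False
  then obtain u0 where "incompatible F {v,x} {v,u0}" by auto
  then have vxE: "{v,x} \<in> E" using inc_D by simp
  let ?S = "{e'. e' \<noteq> {v,x} \<and> v \<in> e' \<and> {{v,x}, e'} \<in> F v}"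
  have S: "real (card ?S) \<le> m" using bd vxE unfolding bounded_system_def by auto
  have "inj_on (\<lambda>u. {v,u}) {u\<in>V. incompatible F {v,x} {v,u}}"
  proof (rule inj_onI)
    fix a b assume a: "a \<in> {u\<in>V. incompatible F {v,x} {v,u}}" and b: "b \<in> {u\<in>V. incompatible F {v,x} {v,u}}"
      and eq: "{v,a} = {v,b}"
    have "v \<noteq> a" using a inc_D[of "{v,x}" "{v,a}"] edge_ne[of v a] by simp
    moreover have "v \<noteq> b" using b inc_D[of "{v,x}" "{v,b}"] edge_ne[of v b] by simp
    ultimately show "a = b" using eq by (auto simp: doubleton_eq_iff)
  qed
  moreover have "(\<lambda>u. {v,u}) ` {u\<in>V. incompatible F {v,x} {v,u}} \<subseteq> ?S"
  proof
    fix e assume "e \<in> (\<lambda>u. {v,u}) ` {u\<in>V. incompatible F {v,x} {v,u}}"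
    then obtain u where u: "e = {v,u}" "incompatible F {v,x} {v,u}" by auto
    from inc_D[OF u(2)] have h: "{v,x} \<noteq> {v,u}" "\<exists>z. {v,x} \<inter> {v,u} = {z} \<and> {{v,x},{v,u}} \<in> F z"
      by simp_all
    then obtain z where z: "{v,x} \<inter> {v,u} = {z}" "{{v,x},{v,u}} \<in> F z" "{v,x} \<noteq> {v,u}" by blast
    then have "z = v" by auto
    then show "e \<in> ?S" using u z by auto
  qed
  ultimately have "card {u\<in>V. incompatible F {v,x} {v,u}} \<le> card ?S"
    using F_fin by (rule card_inj_on_le)
  then show ?thesis using S by linarith
qed

end



lemma inc_swap: "incompatible F {u,a} {a,b} \<longleftrightarrow> incompatible F {a,b} {a,u}"
proof -
  have "{u,a} = {a,u}" by auto
  then show ?thesis using inc_sym[of F "{a,u}" "{a,b}"] by simp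
qed

lemma inc_swap2: "incompatible F {w,u} {x,u} \<longleftrightarrow> incompatible F {u,x} {u,w}"
proof -
  have "{w,u} = {u,w}" "{x,u} = {u,x}" by auto
  then show ?thesis using inc_sym[of F "{u,x}" "{u,w}"] by simp
qed

context gsetting begin

lemma no_inc_small:
  assumes "m < 1" shows "\<not> incompatible F e e'"
proof
  assume a: "incompatible F e e'"
  from inc_D[OF a] have h: "e \<in> E" "\<exists>v. e \<inter> e' = {v} \<and> {e,e'} \<in> F v" "e \<noteq> e'" by simp_all
  then obtain v where v: "e \<inter> e' = {v}" "{e,e'} \<in> F v" by blast
  let ?S = "{e'. e' \<noteq> e \<and> v \<in> e' \<and> {e, e'} \<in> F v}"
  have ve: "v \<in> e" using v by auto
  have "real (card ?S) \<le> m" using bd h(1) ve unfolding bounded_system_def by auto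
  then have "card ?S = 0" using assms by linarith
  then have e1: "?S = {}" using F_fin by (simp only: card_eq_0_iff) simp
  have e2: "e' \<in> ?S" using v h(3) by auto
  from e1 e2 show False by (simp only: empty_iff)
qed

lemma lemB: "(\<Sum>u\<in>V. real (card (bad_neighbors E F P u))) \<le> 2 * real (length P) * m"
proof -
  define L where "L = length P"
  define Aa where "Aa = (\<lambda>i u. 0 < i \<and> incompatible F {u, P!i} {P!i, P!(i-1)})"
  define Bb where "Bb = (\<lambda>i u. Suc i < L \<and> incompatible F {u, P!i} {P!i, P!Suc i})"
  have 1: "card (bad_neighbors E F P u) \<le> card {i\<in>{..<L}. Aa i u} + card {i\<in>{..<L}. Bb i u}" for u
  proof -
    have im: "bad_neighbors E F P u = (\<lambda>i. P!i) ` {i. bad_neighbor E F P u i}"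
      by (auto simp: bad_neighbors_def)
    have sub: "{i. bad_neighbor E F P u i} \<subseteq> {i\<in>{..<L}. Aa i u} \<union> {i\<in>{..<L}. Bb i u}"
      by (auto simp: bad_neighbor_def Aa_def Bb_def L_def)
    have f: "finite ({i\<in>{..<L}. Aa i u} \<union> {i\<in>{..<L}. Bb i u})" by simp
    have "card (bad_neighbors E F P u) \<le> card {i. bad_neighbor E F P u i}"
      unfolding im by (rule card_image_le, rule finite_subset[OF sub f])
    also have "\<dots> \<le> card ({i\<in>{..<L}. Aa i u} \<union> {i\<in>{..<L}. Bb i u})" by (rule card_mono[OF f sub])
    also have "\<dots> \<le> card {i\<in>{..<L}. Aa i u} + card {i\<in>{..<L}. Bb i u}" by (rule card_Un_le)
    finally show ?thesis .
  qed
  have 2: "real (card {u\<in>V. Aa i u}) \<le> m" for i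
  proof -
    have "{u\<in>V. Aa i u} \<subseteq> {u\<in>V. incompatible F {P!i, P!(i-1)} {P!i, u}}"
      by (auto simp: Aa_def dest: iffD1[OF inc_swap])
    then have "card {u\<in>V. Aa i u} \<le> card {u\<in>V. incompatible F {P!i, P!(i-1)} {P!i, u}}"
      by (rule card_mono[rotated]) (simp add: finV)
    then show ?thesis using lemA[of "P!i" "P!(i-1)"] by linarith
  qed
  have 3: "real (card {u\<in>V. Bb i u}) \<le> m" for i
  proof -
    have "{u\<in>V. Bb i u} \<subseteq> {u\<in>V. incompatible F {P!i, P!Suc i} {P!i, u}}"
      by (auto simp: Bb_def dest: iffD1[OF inc_swap])
    then have "card {u\<in>V. Bb i u} \<le> card {u\<in>V. incompatible F {P!i, P!Suc i} {P!i, u}}"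
      by (rule card_mono[rotated]) (simp add: finV)
    then show ?thesis using lemA[of "P!i" "P!Suc i"] by linarith
  qed
  have sA: "(\<Sum>u\<in>V. card {i\<in>{..<L}. Aa i u}) = (\<Sum>i\<in>{..<L}. card {u\<in>V. Aa i u})"
    by (rule card_swap) (simp_all add: finV)
  have sB: "(\<Sum>u\<in>V. card {i\<in>{..<L}. Bb i u}) = (\<Sum>i\<in>{..<L}. card {u\<in>V. Bb i u})"
    by (rule card_swap) (simp_all add: finV)
  have "(\<Sum>u\<in>V. real (card (bad_neighbors E F P u)))
      \<le> (\<Sum>u\<in>V. real (card {i\<in>{..<L}. Aa i u}) + real (card {i\<in>{..<L}. Bb i u}))"
    by (rule sum_mono) (use 1 in \<open>simp add: of_nat_add[symmetric] del: of_nat_add\<close>)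
  also have "\<dots> = real (\<Sum>u\<in>V. card {i\<in>{..<L}. Aa i u}) + real (\<Sum>u\<in>V. card {i\<in>{..<L}. Bb i u})"
    by (simp add: sum.distrib)
  also have "\<dots> = (\<Sum>i\<in>{..<L}. real (card {u\<in>V. Aa i u})) + (\<Sum>i\<in>{..<L}. real (card {u\<in>V. Bb i u}))"
    unfolding sA sB by simp
  also have "\<dots> \<le> (\<Sum>i\<in>{..<L}. m) + (\<Sum>i\<in>{..<L}. m)"
    by (rule add_mono; rule sum_mono) (use 2 3 in auto)
  also have "\<dots> = 2 * real (length P) * m" by (simp add: L_def)
  finally show ?thesis .
qed

lemma lemB':
  assumes "0 < c"
  shows "real (card {u\<in>V. c \<le> real (card (bad_neighbors E F P u))}) * c \<le> 2 * real (length P) * m"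
proof -
  let ?S = "{u\<in>V. c \<le> real (card (bad_neighbors E F P u))}"
  have "real (card ?S) * c = (\<Sum>u\<in>?S. c)" by simp
  also have "\<dots> \<le> (\<Sum>u\<in>?S. real (card (bad_neighbors E F P u)))" by (rule sum_mono) auto
  also have "\<dots> \<le> (\<Sum>u\<in>V. real (card (bad_neighbors E F P u)))"
    by (rule sum_mono2) (auto simp: finV)
  also have "\<dots> \<le> 2 * real (length P) * m" by (rule lemB)
  finally show ?thesis .
qed

lemma lemC':
  assumes "0 < g"
  shows "real (card {w\<in>V. correlated V E F g w x}) * (g * real (card V)) \<le> real (card V) * m"
proof -
  define c where "c = (\<lambda>w. card {u\<in>V. {w,u}\<in>E \<and> {x,u}\<in>E \<and> incompatible F {w,u} {x,u}})"
  let ?S = "{w\<in>V. correlated V E F g w x}"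
  have cor: "w \<in> ?S \<Longrightarrow> g * real (card V) \<le> real (c w)" for w
    by (simp add: correlated_def c_def)
  have sw: "(\<Sum>w\<in>V. c w) = (\<Sum>u\<in>V. card {w\<in>V. {w,u}\<in>E \<and> {x,u}\<in>E \<and> incompatible F {w,u} {x,u}})"
    unfolding c_def by (rule card_swap) (simp_all add: finV)
  have each: "real (card {w\<in>V. {w,u}\<in>E \<and> {x,u}\<in>E \<and> incompatible F {w,u} {x,u}}) \<le> m" for u
  proof -
    have "{w\<in>V. {w,u}\<in>E \<and> {x,u}\<in>E \<and> incompatible F {w,u} {x,u}} \<subseteq> {w\<in>V. incompatible F {u,x} {u,w}}"
      by (auto dest: iffD1[OF inc_swap2])
    then have "card {w\<in>V. {w,u}\<in>E \<and> {x,u}\<in>E \<and> incompatible F {w,u} {x,u}} \<le> card {w\<in>V. incompatible F {u,x} {u,w}}"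
      by (rule card_mono[rotated]) (simp add: finV)
    then show ?thesis using lemA[of u x] by linarith
  qed
  have "real (card ?S) * (g * real (card V)) = (\<Sum>w\<in>?S. g * real (card V))" by simp
  also have "\<dots> \<le> (\<Sum>w\<in>?S. real (c w))" by (rule sum_mono) (use cor in auto)
  also have "\<dots> \<le> (\<Sum>w\<in>V. real (c w))" by (rule sum_mono2) (auto simp: finV)
  also have "\<dots> = real (\<Sum>w\<in>V. c w)" by simp
  also have "\<dots> = (\<Sum>u\<in>V. real (card {w\<in>V. {w,u}\<in>E \<and> {x,u}\<in>E \<and> incompatible F {w,u} {x,u}}))"
    unfolding sw by simp
  also have "\<dots> \<le> (\<Sum>u\<in>V. m)" by (rule sum_mono) (use each in auto)
  also have "\<dots> = real (card V) * m" by simp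
  finally show ?thesis .
qed

end



lemma pe_cons_path: "P \<noteq> [] \<Longrightarrow> path_edges (w # P) = insert {w, hd P} (path_edges P)"
  by (simp add: path_edges_pe pe_Cons)

lemma rot:
  assumes "0 < i" "i < length P" "distinct P"
  defines "Q \<equiv> rev (take i P) @ drop i P"
  shows "distinct Q" "set Q = set P" "length Q = length P" "hd Q = P!(i-1)" "last Q = last P"
    "path_edges Q \<subseteq> path_edges P \<union> {{P!0, P!i}}"
proof -
  have t: "take i P \<noteq> []" using assms by (cases P) auto
  have d: "drop i P \<noteq> []" using assms by simp
  have "distinct (take i P @ drop i P)" using assms by simp
  then show "distinct Q" unfolding Q_def by (simp del: append_take_drop_id)
  have "set (take i P) \<union> set (drop i P) = set P"
    by (metis append_take_drop_id set_append)
  then show "set Q = set P" unfolding Q_def by simp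
  show "length Q = length P" unfolding Q_def using assms by simp
  have "hd Q = hd (rev (take i P))" unfolding Q_def using t by simp
  also have "\<dots> = last (take i P)" by (simp add: hd_rev)
  also have "\<dots> = P!(i-1)" using assms t by (simp add: last_conv_nth)
  finally show "hd Q = P!(i-1)" .
  show "last Q = last P" unfolding Q_def using d by simp
  have hdt: "hd (take i P) = P!0" using assms by (cases P) auto
  have hdd: "hd (drop i P) = P!i" using assms by (simp add: hd_drop_conv_nth)
  have "path_edges Q = pe (take i P) \<union> pe (drop i P) \<union> {{P!0, P!i}}"
    unfolding Q_def path_edges_pe using t d
    by (simp add: pe_append pe_rev last_rev hdt hdd)
  moreover have "path_edges P = pe (take i P) \<union> pe (drop i P) \<union> {{last (take i P), hd (drop i P)}}"
    using pe_append[OF t d] by (simp add: path_edges_pe)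
  ultimately show "path_edges Q \<subseteq> path_edges P \<union> {{P!0, P!i}}" by auto
qed

context gsetting begin

lemma compat_ext:
  assumes "compatible_path F P" "path_edges Q \<subseteq> path_edges P \<union> {f}"
    "\<forall>e\<in>path_edges P. \<not> incompatible F f e"
  shows "compatible_path F Q"
  unfolding compatible_path_def
proof (intro ballI)
  fix e e' assume e: "e \<in> path_edges Q" and e': "e' \<in> path_edges Q"
  show "\<not> incompatible F e e'"
  proof (cases "e = f")
    case True
    show ?thesis
    proof (cases "e' = f")
      case True then show ?thesis using \<open>e = f\<close> not_inc_self by simp
    next
      case False then have "e' \<in> path_edges P" using e' assms(2) by auto
      then show ?thesis using assms(3) True by simp
    qed
  next
    case False
    then have eP: "e \<in> path_edges P" using e assms(2) by auto
    show ?thesis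
    proof (cases "e' = f")
      case True then show ?thesis using assms(3) eP inc_sym by metis
    next
      case False then have "e' \<in> path_edges P" using e' assms(2) by auto
      then show ?thesis using assms(1) eP unfolding compatible_path_def by simp
    qed
  qed
qed

lemma bad_fin: "finite (bad_neighbors E F P u)"
  using bad_sub_set finite_set finite_subset by metis

lemma bad_card_le:
  assumes "distinct P" "distinct Q" "path_edges Q \<subseteq> path_edges P \<union> {f}"
    "\<forall>y\<in>f. \<not> incompatible F {u,y} f"
  shows "card (bad_neighbors E F Q u) \<le> card (bad_neighbors E F P u)"
proof -
  have "bad_neighbors E F Q u \<subseteq> bad_neighbors E F P u"
    using bad_mono[OF assms(1-3), where u=u] assms(4) by auto
  then show ?thesis using bad_fin by (rule card_mono[rotated])
qed

lemma bad_card_le2: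
  assumes "distinct P" "distinct Q" "path_edges Q \<subseteq> path_edges P \<union> {{a,b}}"
  shows "card (bad_neighbors E F Q u) \<le> card (bad_neighbors E F P u) + 2"
proof -
  have s: "bad_neighbors E F Q u \<subseteq> bad_neighbors E F P u \<union> {a,b}"
    using bad_mono[OF assms(1-3), where u=u] by auto
  have "card (bad_neighbors E F Q u) \<le> card (bad_neighbors E F P u \<union> {a,b})"
    using s by (rule card_mono[rotated]) (simp add: bad_fin)
  also have "\<dots> \<le> card (bad_neighbors E F P u) + card {a,b}" by (rule card_Un_le)
  also have "card {a,b} \<le> 2" by (cases "a = b") simp_all
  finally show ?thesis by simp
qed

lemma degree_N: "degree E v = card {u. {v,u} \<in> E}"
proof -
  have "{e\<in>E. v \<in> e} = (\<lambda>u. {v,u}) ` {u. {v,u} \<in> E}"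
  proof (rule set_eqI, rule iffI)
    fix e assume e: "e \<in> {e\<in>E. v \<in> e}"
    then have "card e = 2" using edge_card by simp
    then obtain a b where ab: "e = {a,b}" "a \<noteq> b" by (auto simp: card_2_iff)
    then have "e = {v,b} \<or> e = {v,a}" using e by auto
    then show "e \<in> (\<lambda>u. {v,u}) ` {u. {v,u} \<in> E}" using e by auto
  qed auto
  moreover have "inj_on (\<lambda>u. {v,u}) {u. {v,u} \<in> E}"
  proof (rule inj_onI)
    fix a b assume "a \<in> {u. {v,u} \<in> E}" "b \<in> {u. {v,u} \<in> E}" "{v,a} = {v,b}"
    moreover have "v \<noteq> a" "v \<noteq> b" using calculation edge_ne by auto
    ultimately show "a = b" by (auto simp: doubleton_eq_iff)
  qed
  ultimately show ?thesis unfolding degree_def by (simp add: card_image)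
qed

end



lemma card_Un5: "card (A1 \<union> A2 \<union> A3 \<union> A4 \<union> A5) \<le> card A1 + card A2 + card A3 + card A4 + card A5"
  using card_Un_le[of "A1\<union>A2\<union>A3\<union>A4" A5] card_Un_le[of "A1\<union>A2\<union>A3" A4]
    card_Un_le[of "A1\<union>A2" A3] card_Un_le[of A1 A2] by linarith

lemma card_succ_img:
  assumes "distinct P" "finite S"
  shows "card ((\<lambda>j. P!Suc j) ` {j. Suc j < length P \<and> P!j \<in> S}) \<le> card S"
proof -
  have "card ((\<lambda>j. P!Suc j) ` {j. Suc j < length P \<and> P!j \<in> S}) \<le> card {j. Suc j < length P \<and> P!j \<in> S}"
    by (rule card_image_le, rule finite_subset[of _ "{..<length P}"]) auto
  also have "\<dots> \<le> card S"
  proof (rule card_inj_on_le[OF _ _ assms(2)])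
    show "inj_on (nth P) {j. Suc j < length P \<and> P!j \<in> S}" by (rule inj_on_nth[OF assms(1)]) auto
    show "nth P ` {j. Suc j < length P \<and> P!j \<in> S} \<subseteq> S" by auto
  qed
  finally show ?thesis .
qed

theorem lemma2p5:
  fixes V :: "'a set" and E :: "'a set set" and F :: "'a \<Rightarrow> 'a set set set"
    and \<mu> :: real and P :: "'a list"
  assumes "simple_graph V E"
    and "0 < \<mu>" and "\<mu> \<le> 1 / 225"
    and "\<forall>v\<in>V. real (degree E v) \<ge> 15 * sqrt \<mu> * real (card V)"
    and "incompat_system V E F"
    and "bounded_system E F (\<mu> * real (card V))"
    and "smooth_path V E F \<mu> P"
    and "\<not> (\<exists>w. w \<notin> set P \<and> smooth_path V E F \<mu> (w # P))"
  shows "\<exists>X. X \<subseteq> good_neighbors E F P (P ! 0) \<and>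
           real (card X) \<ge> real (degree E (P ! 0)) - 14 * sqrt \<mu> * real (card V) \<and>
           (\<forall>i < length P. P ! i \<in> X \<longrightarrow> smooth_path V E F \<mu> (rev (take i P) @ drop i P))"
proof -
  define n where "n = real (card V)"
  define s where "s = sqrt \<mu>"
  define m where "m = \<mu> * n"
  interpret gsetting V E F m
    by unfold_locales (use assms in \<open>auto simp: m_def n_def\<close>)
  have s0: "0 < s" using assms(2) s_def by simp
  have ss: "s * s = \<mu>" using assms(2) s_def by simp
  have s15: "s \<le> 1/15"
  proof -
    have h1: "sqrt (1/225) = (1/15::real)" by (rule real_sqrt_unique) (simp_all add: power2_eq_square)
    have h2: "sqrt \<mu> \<le> sqrt (1/225)" using assms(3) by (rule real_sqrt_le_mono)
    show ?thesis using h1 h2 s_def by linarith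
  qed
  have n00: "0 \<le> n" by (simp add: n_def)
  have mdef: "m = s * (s * n)" using ss m_def by (simp add: mult.assoc)
  have sn0: "0 \<le> s * n" using s0 n00 by simp
  have msn: "m \<le> (1/15) * (s * n)" unfolding mdef by (rule mult_right_mono[OF s15 sn0])
  from assms(7) have sp: "is_path V E P" "compatible_path F P" "gamma_good E F (8*s) P (hd P)"
    "gamma_good E F (8*s) P (last P)" "\<not> correlated V E F s (hd P) (last P)"
    unfolding smooth_path_def s_def by auto
  then have Pne: "P \<noteq> []" and dP: "distinct P" and PV: "set P \<subseteq> V" and PE: "path_edges P \<subseteq> E"
    by (auto simp: is_path_alt)
  define L where "L = length P"
  define v0 where "v0 = P!0"
  define x where "x = last P"
  have hdP: "hd P = v0" using Pne by (simp add: v0_def hd_conv_nth)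
  have L0: "0 < L" using Pne L_def by simp
  have cardP: "card (set P) = L" using dP distinct_card L_def by metis
  have Ln: "real L \<le> n" using card_mono[OF finV PV] cardP n_def by simp
  have v0V: "v0 \<in> V" using hdP Pne PV by (metis hd_in_set subsetD)
  have xV: "x \<in> V" using Pne PV x_def by (metis last_in_set subsetD)
  have goodv0: "real (card (bad_neighbors E F P v0)) < 8 * s * real L"
    using sp(3) hdP by (simp add: gamma_good_def gamma_bad_def L_def)
  have goodx: "real (card (bad_neighbors E F P x)) < 8 * s * real L"
    using sp(4) by (simp add: gamma_good_def gamma_bad_def L_def x_def)
  have uncor: "\<not> correlated V E F s v0 x" using sp(5) hdP x_def by simp
  have n0: "0 < n" using v0V finV n_def card_gt_0_iff by fastforce

  define N where "N = {u. {v0,u} \<in> E}"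
  have NV: "N \<subseteq> V" using edge_V by (auto simp: N_def)
  have finN: "finite N" using NV finV finite_subset by blast
  have dN: "degree E (P!0) = card N" using degree_N by (simp add: N_def v0_def)
  have dge: "15 * (s * n) \<le> real (card N)"
  proof -
    have "15 * sqrt \<mu> * real (card V) \<le> real (degree E (P!0))" using assms(4) v0V v0_def by simp
    then show ?thesis using dN by (simp add: s_def n_def mult.assoc)
  qed

  define A1 where "A1 = {w\<in>V. incompatible F {v0, P!1} {v0, w}}"
  define A2 where "A2 = {w\<in>V. incompatible F {v0, x} {v0, w}}"
  define A3 where "A3 = {w\<in>V. {v0,w}\<in>E \<and> {x,w}\<in>E \<and> incompatible F {v0,w} {x,w}}"
  define A4 where "A4 = {w\<in>V. correlated V E F s w x}"
  define A5 where "A5 = {w\<in>V. 8 * s * real L \<le> real (card (bad_neighbors E F P w))}"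
  have cA1: "real (card A1) \<le> m" unfolding A1_def by (rule lemA)
  have cA2: "real (card A2) \<le> m" unfolding A2_def by (rule lemA)
  have cA3: "real (card A3) < s * n" using uncor unfolding correlated_def A3_def n_def by simp
  have cA4: "real (card A4) \<le> s * n"
  proof -
    have "real (card A4) * (s * n) \<le> n * m" unfolding A4_def n_def using lemC'[OF s0, of x] by simp
    also have "\<dots> = (s * n) * (s * n)" by (simp add: mdef algebra_simps)
    finally show ?thesis using mult_le_cancel_right_pos[of "s*n"] s0 n0 by simp
  qed
  have cA5: "real (card A5) \<le> s * n / 4"
  proof -
    have p: "0 < 8 * s * real L" using s0 L0 by simp
    have "real (card A5) * (8 * s * real L) \<le> 2 * real L * m"
      unfolding A5_def L_def using lemB'[OF p[unfolded L_def], of P] by simp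
    also have "\<dots> = (s * n / 4) * (8 * s * real L)" by (simp add: mdef algebra_simps)
    finally show ?thesis by (rule iffD1[OF mult_le_cancel_right_pos[OF p]])
  qed
  have finA: "finite (A1 \<union> A2 \<union> A3 \<union> A4 \<union> A5)"
    by (rule finite_subset[OF _ finV]) (auto simp: A1_def A2_def A3_def A4_def A5_def)

  have out: "N - set P \<subseteq> A1 \<union> A2 \<union> A3 \<union> A4 \<union> A5"
  proof
    fix w assume w: "w \<in> N - set P"
    show "w \<in> A1 \<union> A2 \<union> A3 \<union> A4 \<union> A5"
    proof (rule ccontr)
      assume nw: "w \<notin> A1 \<union> A2 \<union> A3 \<union> A4 \<union> A5"
      have wV: "w \<in> V" using w NV by auto
      have e0: "{v0,w} \<in> E" using w N_def by auto
      have wP: "w \<notin> set P" using w by simp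
      have f1: "{w,v0} = {v0,w}" by auto
      define W where "W = w # P"
      have dW: "distinct W" using dP wP W_def by simp
      have peW: "path_edges W = insert {w, v0} (path_edges P)"
        using pe_cons_path[OF Pne] hdP W_def by simp
      have peW': "path_edges W \<subseteq> path_edges P \<union> {{w,v0}}" using peW by auto
      have pathW: "is_path V E W" unfolding is_path_alt
        using dW PV wV PE e0 f1 peW W_def by auto
      have compW: "compatible_path F W"
      proof (rule compat_ext[OF sp(2) peW'])
        show "\<forall>e\<in>path_edges P. \<not> incompatible F {w,v0} e"
        proof (intro ballI notI)
          fix e assume eP: "e \<in> path_edges P" and inc: "incompatible F {w,v0} e"
          have "\<exists>z. {w,v0} \<inter> e = {z}" using inc_D[OF inc] by auto
          then obtain z where z: "{w,v0} \<inter> e = {z}" by blast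
          have eS: "e \<subseteq> set P" using pe_sub_set[of e P] eP by (simp add: path_edges_pe)
          have "z \<in> e" "z \<in> {w,v0}" using z by auto
          then have "z = v0" using eS wP by auto
          then have "hd P \<in> e" using \<open>z \<in> e\<close> hdP by simp
          then have "e = {P!0, P!1}" using pe_hd[OF dP] eP by (simp add: path_edges_pe)
          then have "incompatible F {w,v0} {v0, P!1}" using inc v0_def by simp
          then have "incompatible F {v0, P!1} {v0, w}" using inc_sym f1 by metis
          then show False using nw wV A1_def by auto
        qed
      qed
      have gw: "gamma_good E F (8*s) W w"
      proof -
        have "\<forall>y\<in>{w,v0}. \<not> incompatible F {w,y} {w,v0}"
        proof
          fix y assume "y \<in> {w,v0}"
          then show "\<not> incompatible F {w,y} {w,v0}"
          proof
            assume "y = w"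
            then show ?thesis using inc_D[of "{w,y}" "{w,v0}"] edge_ne[of w w] by auto
          next
            assume "y \<in> {v0}" then show ?thesis using not_inc_self by simp
          qed
        qed
        then have "card (bad_neighbors E F W w) \<le> card (bad_neighbors E F P w)"
          by (rule bad_card_le[OF dP dW peW'])
        moreover have "real (card (bad_neighbors E F P w)) < 8 * s * real L"
          using nw wV A5_def by auto
        moreover have "8 * s * real L \<le> 8 * s * real (length W)" using s0 W_def L_def by simp
        ultimately show ?thesis unfolding gamma_good_def gamma_bad_def by linarith
      qed
      have lW: "last W = x" using Pne W_def x_def by simp
      have gx: "gamma_good E F (8*s) W (last W)"
      proof -
        have "\<forall>y\<in>{w,v0}. \<not> incompatible F {x,y} {w,v0}"
        proof
          fix y assume "y \<in> {w,v0}"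
          then show "\<not> incompatible F {x,y} {w,v0}"
          proof
            assume y: "y = w"
            show ?thesis
            proof
              assume i: "incompatible F {x,y} {w,v0}"
              then have "{x,w} \<in> E" using inc_D y by blast
              moreover have "incompatible F {v0,w} {x,w}" using i y inc_sym f1 by metis
              ultimately show False using nw wV e0 A3_def by auto
            qed
          next
            assume "y \<in> {v0}"
            then have y: "y = v0" by simp
            show ?thesis
            proof
              assume i: "incompatible F {x,y} {w,v0}"
              have "{x,v0} = {v0,x}" by auto
              then have "incompatible F {v0,x} {v0,w}" using i y f1 by simp
              then show False using nw wV A2_def by auto
            qed
          qed
        qed
        then have "card (bad_neighbors E F W x) \<le> card (bad_neighbors E F P x)"
          by (rule bad_card_le[OF dP dW peW'])
        moreover have "8 * s * real L \<le> 8 * s * real (length W)" using s0 W_def L_def by simp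
        ultimately show ?thesis using goodx unfolding lW gamma_good_def gamma_bad_def by linarith
      qed
      have cw: "\<not> correlated V E F s (hd W) (last W)"
        using nw wV A4_def lW W_def by auto
      have "smooth_path V E F \<mu> W"
        unfolding smooth_path_def using pathW compW gw gx cw W_def s_def by simp
      then show False using assms(8) wP W_def by auto
    qed
  qed
  have cOut: "real (card (N - set P)) \<le> 2 * m + 9/4 * (s * n)"
  proof -
    have "card (N - set P) \<le> card (A1 \<union> A2 \<union> A3 \<union> A4 \<union> A5)" by (rule card_mono[OF finA out])
    also have "\<dots> \<le> card A1 + card A2 + card A3 + card A4 + card A5" by (rule card_Un5)
    finally have "real (card (N - set P)) \<le> real (card A1) + real (card A2) + real (card A3) + real (card A4) + real (card A5)"
      by linarith
    then show ?thesis using cA1 cA2 cA3 cA4 cA5 by linarith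
  qed
  define Nin where "Nin = N \<inter> set P"
  have cN: "card N \<le> card (N - set P) + card Nin"
  proof -
    have "N = (N - set P) \<union> Nin" by (auto simp: Nin_def)
    then show ?thesis using card_Un_le[of "N - set P" Nin] by simp
  qed
  have cNin: "card Nin \<le> L" using cardP card_mono[of "set P" Nin] Nin_def by auto
  have L12: "12 * (s * n) \<le> real L" using cN cNin cOut dge msn by linarith

  define T where "T = (if 1 \<le> m then {u\<in>V. 8 * s * real L \<le> real (card (bad_neighbors E F P u)) + 2} else {})"
  have finT: "finite T" unfolding T_def using finV by auto
  have cT: "real (card T) \<le> s * n"
  proof (cases "1 \<le> m")
    case True
    have "s * real L \<ge> s * (12 * (s * n))" using L12 s0 by (simp add: mult_left_mono)
    also have "s * (12 * (s * n)) = 12 * m" using mdef by simp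
    finally have sL: "s * real L \<ge> 12" using True by linarith
    define c where "c = 8 * s * real L - 2"
    have c7: "7 * (s * real L) \<le> c" using sL c_def by linarith
    have p: "0 < 7 * (s * real L)" using sL by linarith
    have c0: "0 < c" using c7 p by linarith
    have Teq: "T = {u\<in>V. c \<le> real (card (bad_neighbors E F P u))}" using True unfolding T_def c_def
      by auto
    have "real (card T) * (7 * (s * real L)) \<le> real (card T) * c"
      using c7 by (simp add: mult_left_mono)
    also have "\<dots> \<le> 2 * real (length P) * m" unfolding Teq by (rule lemB'[OF c0])
    also have "\<dots> = (2/7 * (s * n)) * (7 * (s * real L))" by (simp add: mdef L_def algebra_simps)
    finally have "real (card T) \<le> 2/7 * (s * n)" by (rule iffD1[OF mult_le_cancel_right_pos[OF p]])
    then show ?thesis using sn0 by linarith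
  next
    case False then show ?thesis using sn0 by (simp add: T_def)
  qed
  define B4 where "B4 = (\<lambda>j. P!Suc j) ` {j. Suc j < length P \<and> P!j \<in> T}"
  define B5 where "B5 = (\<lambda>j. P!Suc j) ` {j. Suc j < length P \<and> P!j \<in> A4}"
  have finA4: "finite A4" unfolding A4_def using finV by simp
  have cB4: "real (card B4) \<le> s * n" using card_succ_img[OF dP finT] cT unfolding B4_def by linarith
  have cB5: "real (card B5) \<le> s * n" using card_succ_img[OF dP finA4] cA4 unfolding B5_def by linarith
  define Bx where "Bx = A1 \<union> A2 \<union> A3 \<union> B4 \<union> B5"
  define X where "X = good_neighbors E F P v0 - Bx"
  have finG: "finite (good_neighbors E F P v0)"
    by (rule finite_subset[of _ "set P"]) (auto simp: good_neighbors_def good_neighbor_def)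
  have fj: "finite {j. Suc j < length P \<and> Z j}" for Z by (rule finite_subset[of _ "{..<length P}"]) auto
  have finBx: "finite Bx" unfolding Bx_def B4_def B5_def using fj
    by (simp add: A1_def A2_def A3_def finV)
  have cG: "card (good_neighbors E F P v0) \<le> card X + card Bx"
  proof -
    have "good_neighbors E F P v0 \<subseteq> X \<union> Bx" unfolding X_def by auto
    then have "card (good_neighbors E F P v0) \<le> card (X \<union> Bx)"
      by (rule card_mono[rotated]) (simp add: X_def finG finBx)
    then show ?thesis using card_Un_le[of X Bx] by linarith
  qed
  have cBx: "card Bx \<le> card A1 + card A2 + card A3 + card B4 + card B5"
    unfolding Bx_def by (rule card_Un5)
  have cNinG: "card Nin \<le> card (good_neighbors E F P v0) + card (bad_neighbors E F P v0)"
  proof -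
    have "Nin \<subseteq> good_neighbors E F P v0 \<union> bad_neighbors E F P v0"
    proof
      fix u assume u: "u \<in> Nin"
      then obtain k where k: "k < length P" "u = P!k" by (auto simp: Nin_def in_set_conv_nth)
      have "{v0, P!k} \<in> E" using u k by (simp add: Nin_def N_def)
      then show "u \<in> good_neighbors E F P v0 \<union> bad_neighbors E F P v0"
        using k by (cases "bad_neighbor E F P v0 k")
          (auto simp: good_neighbors_def bad_neighbors_def good_neighbor_def)
    qed
    then have "card Nin \<le> card (good_neighbors E F P v0 \<union> bad_neighbors E F P v0)"
      by (rule card_mono[rotated]) (simp add: finG bad_fin)
    then show ?thesis using card_Un_le[of "good_neighbors E F P v0" "bad_neighbors E F P v0"] by linarith
  qed
  have sL8: "8 * s * real L \<le> 8 * (s * n)" using Ln s0 by (simp add: mult_left_mono)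
  have cX: "real (degree E (P ! 0)) - 14 * sqrt \<mu> * real (card V) \<le> real (card X)"
  proof -
    have "real (degree E (P ! 0)) = real (card N)" using dN by simp
    moreover have "14 * sqrt \<mu> * real (card V) = 14 * (s * n)" by (simp add: s_def n_def)
    ultimately show ?thesis using cN cNinG cG cBx cOut goodv0 sL8 cA1 cA2 cA3 cB4 cB5 msn
      by linarith
  qed
  have XG: "X \<subseteq> good_neighbors E F P (P ! 0)" unfolding X_def v0_def by auto
  have rotok: "smooth_path V E F \<mu> (rev (take i P) @ drop i P)" if iL: "i < length P" and iX: "P!i \<in> X" for i
  proof -
    have iG: "P!i \<in> good_neighbors E F P v0" and iB: "P!i \<notin> Bx" using iX X_def by auto
    obtain j where j: "P!i = P!j" "good_neighbor E F P v0 j" using iG by (auto simp: good_neighbors_def)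
    have "j < length P" using j by (simp add: good_neighbor_def)
    then have "i = j" using j iL dP by (simp add: nth_eq_iff_index_eq)
    then have gn: "good_neighbor E F P v0 i" using j by simp
    have ei: "{v0, P!i} \<in> E" using gn by (simp add: good_neighbor_def)
    have nb: "\<not> bad_neighbor E F P v0 i" using gn by (simp add: good_neighbor_def)
    have iV: "P!i \<in> V" using ei edge_V by blast
    have i0: "0 < i"
    proof (rule ccontr)
      assume "\<not> 0 < i" then have "i = 0" by simp
      then show False using ei edge_ne[of v0 "P!i"] v0_def by simp
    qed
    have notbad: "P!i \<notin> bad_neighbors E F P v0"
    proof
      assume "P!i \<in> bad_neighbors E F P v0"
      then obtain k where k: "P!i = P!k" "bad_neighbor E F P v0 k" by (auto simp: bad_neighbors_def)
      have "k < length P" using k by (simp add: bad_neighbor_def)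
      then have "i = k" using k iL dP by (simp add: nth_eq_iff_index_eq)
      then show False using k nb by simp
    qed
    have iset: "P!i \<in> set P" using iL by simp
    have nb2: "\<not> incompatible F {v0, P!i} e" if "e \<in> path_edges P" "P!i \<in> e" for e
      using notbad bad_char[OF dP, of E F v0] iset ei that by auto
    define Q where "Q = rev (take i P) @ drop i P"
    note R = rot[OF i0 iL dP, folded Q_def]
    have f0: "{P!0, P!i} = {v0, P!i}" using v0_def by simp
    have peQ: "path_edges Q \<subseteq> path_edges P \<union> {{v0, P!i}}" using R(6) f0 by simp
    have pathQ: "is_path V E Q" unfolding is_path_alt
      using R(1,2,3) peQ PV PE ei L0 L_def by auto
    have compQ: "compatible_path F Q"
    proof (rule compat_ext[OF sp(2) peQ])
      show "\<forall>e\<in>path_edges P. \<not> incompatible F {v0, P!i} e"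
      proof (intro ballI notI)
        fix e assume eP: "e \<in> path_edges P" and inc: "incompatible F {v0, P!i} e"
        have "\<exists>z. {v0, P!i} \<inter> e = {z}" using inc_D[OF inc] by auto
        then obtain z where z: "{v0, P!i} \<inter> e = {z}" by blast
        have ze: "z \<in> e" and zf: "z \<in> {v0, P!i}" using z by auto
        show False
        proof (cases "z = v0")
          case True
          then have "hd P \<in> e" using ze hdP by simp
          then have "e = {P!0, P!1}" using pe_hd[OF dP] eP by (simp add: path_edges_pe)
          then have "incompatible F {v0, P!i} {v0, P!1}" using inc v0_def by simp
          then have "incompatible F {v0, P!1} {v0, P!i}" using inc_sym by metis
          then show False using iB iV A1_def Bx_def by auto
        next
          case False
          then have "z = P!i" using zf by simp
          then show False using nb2[OF eP] ze inc by simp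
        qed
      qed
    qed
    have lQ: "length Q = L" using R(3) L_def by simp
    have hQ: "hd Q = P!(i-1)" using R(4) .
    have ymV: "P!(i-1) \<in> V" using PV iL by (simp add: subset_iff)
    have gy: "gamma_good E F (8*s) Q (hd Q)"
    proof (cases "1 \<le> m")
      case True
      have "P!(i-1) \<notin> T"
      proof
        assume "P!(i-1) \<in> T"
        then have "P!i \<in> B4" unfolding B4_def using i0 iL by (intro image_eqI[where x="i-1"]) auto
        then show False using i0 iB Bx_def by simp
      qed
      then have "real (card (bad_neighbors E F P (P!(i-1)))) + 2 < 8 * s * real L"
        using True ymV T_def by auto
      moreover have "card (bad_neighbors E F Q (P!(i-1))) \<le> card (bad_neighbors E F P (P!(i-1))) + 2"
        by (rule bad_card_le2[OF dP R(1) peQ])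
      ultimately show ?thesis unfolding hQ gamma_good_def gamma_bad_def lQ by linarith
    next
      case False
      then have "m < 1" by simp
      then have "bad_neighbors E F Q (P!(i-1)) = {}"
        using no_inc_small by (auto simp: bad_neighbors_def bad_neighbor_def)
      moreover have "0 < s * real L" using s0 L0 by simp
      ultimately show ?thesis unfolding hQ gamma_good_def gamma_bad_def lQ by simp
    qed
    have gxQ: "gamma_good E F (8*s) Q (last Q)"
    proof -
      have "\<forall>y\<in>{v0, P!i}. \<not> incompatible F {x,y} {v0, P!i}"
      proof
        fix y assume "y \<in> {v0, P!i}"
        then show "\<not> incompatible F {x,y} {v0, P!i}"
        proof
          assume y: "y = v0"
          show ?thesis
          proof
            assume i: "incompatible F {x,y} {v0, P!i}"
            have "{x,v0} = {v0,x}" by auto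
            then have "incompatible F {v0,x} {v0,P!i}" using i y by simp
            then show False using iB iV A2_def Bx_def by auto
          qed
        next
          assume "y \<in> {P!i}"
          then have y: "y = P!i" by simp
          show ?thesis
          proof
            assume i: "incompatible F {x,y} {v0, P!i}"
            then have "{x,P!i} \<in> E" using inc_D y by blast
            moreover have "incompatible F {v0,P!i} {x,P!i}" using i y inc_sym by metis
            ultimately show False using iB iV ei A3_def Bx_def by auto
          qed
        qed
      qed
      then have "card (bad_neighbors E F Q x) \<le> card (bad_neighbors E F P x)"
        by (rule bad_card_le[OF dP R(1) peQ])
      then show ?thesis using goodx R(5) unfolding gamma_good_def gamma_bad_def lQ x_def[symmetric]
        by simp
    qed
    have cQ: "\<not> correlated V E F s (hd Q) (last Q)"
    proof
      assume "correlated V E F s (hd Q) (last Q)"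
      then have "P!(i-1) \<in> A4" using hQ R(5) ymV A4_def x_def by simp
      then have "P!i \<in> B5" unfolding B5_def using i0 iL by (intro image_eqI[where x="i-1"]) auto
      then show False using i0 iB Bx_def by simp
    qed
    show ?thesis unfolding Q_def[symmetric] smooth_path_def
      using pathQ compQ gy gxQ cQ s_def by simp
  qed
  show ?thesis using XG cX rotok by blast
qed


end
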